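(* Let $\Omega\subset\mathbb{R}^n$ be a bounded domain, take $\omega=\Omega$, let $m\ge2$, $k\ge1$ be integers, let $y_0\in L^2(\Omega)$ with $y_0\notin\mathcal{S}_m$, and let $\bar a_1,\dots,\bar a_k$ be positive numbers. For each $i\in\{1,\dots,k\}$ put $$T_i=\frac{1}{\lambda_i}\ln\Big(1+\frac{\lambda_i}{\bar a_i}\,|\langle y_0,\xi_i\rangle|\Big).$$ Then Problem $(\mathcal{P})$ with $\{\bar a_i\}_{i=1}^k$ does not have the bang-bang property if either of the following holds: (i) $k\ge m$ and the numbers $T_1,\dots,T_m$ are not all the same; (ii) $k<m$, $\langle y_0,\xi_j\rangle=0$ for all $j=k+1,\dots,m$, and the numbers $T_1,\dots,T_k$ are not all the same.
   Context: Let $\Omega\subset\mathbb{R}^n$ be a bounded domain and $\omega\subset\Omega$ a nonempty open set with characteristic function $\chi_\omega$. Let $\{\xi_i\}_{i\ge1}$ be an orthonormal basis of $L^2(\Omega)$ consisting of eigenfunctions of $-\Delta$ with homogeneous Dirichlet boundary condition, with eigenvalues $0<\lambda_1<\lambda_2\le\lambda_3\le\cdots\to+\infty$; $\langle\cdot,\cdot\rangle$ is the $L^2(\Omega)$ inner product. For $u$ and $y_0\in L^2(\Omega)$, $y(\cdot;u,y_0):\mathbb{R}^+\to L^2(\Omega)$ denotes the solution of $\partial_t y-\Delta y=\chi_\omega u$ in $\Omega\times\mathbb{R}^+$, $y=0$ on $\partial\Omega\times\mathbb{R}^+$, $y(\cdot,0)=y_0$. For a fixed integer $m\ge2$, $\mathcal{S}_m=\mathrm{span}\{\xi_{m+1},\xi_{m+2},\dots\}$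 (closed linear span, i.e. the set of $y$ with $\langle y,\xi_i\rangle=0$ for $i\le m$). The control constraint set is $\mathcal{U}_{\{\bar a_i\}_{i=1}^k}=\{\sum_{i=1}^k\alpha_i(\cdot)\xi_i:\ \alpha_i \text{ measurable from }\mathbb{R}^+\text{ to }[-\bar a_i,\bar a_i]\}$. Problem $(\mathcal{P})$ with $\{\bar a_i\}_{i=1}^k$: $\inf\{t\ge0: y(t;u,y_0)\in\mathcal{S}_m\}$ over $u\in\mathcal{U}_{\{\bar a_i\}_{i=1}^k}$; the infimum $t^*$ is the optimal time and an admissible $u^*$ with $y(t^*;u^*,y_0)\in\mathcal{S}_m$ is an optimal control. The problem has the bang-bang property if every optimal control $u^*=\sum_{i=1}^k\alpha_i^*\xi_i$ satisfies, for each $i$, $|\alpha_i^*(t)|=\bar a_i$ for almost every $t\in(0,t^* )$. *)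

theory Defs
  imports "HOL-Analysis.Analysis"
begin

section \<open>The space L^2(Omega) (via representatives)\<close>

definition L2 :: "'a::euclidean_space set \<Rightarrow> ('a \<Rightarrow> real) \<Rightarrow> bool" where
  "L2 \<Omega> f \<longleftrightarrow> f \<in> borel_measurable (lebesgue_on \<Omega>) \<and>
                 integrable (lebesgue_on \<Omega>) (\<lambda>x. (f x)\<^sup>2)"

definition L2v :: "'a::euclidean_space set \<Rightarrow> ('a \<Rightarrow> 'a) \<Rightarrow> bool" where
  "L2v \<Omega> G \<longleftrightarrow> G \<in> borel_measurable (lebesgue_on \<Omega>) \<and>
                 integrable (lebesgue_on \<Omega>) (\<lambda>x. (norm (G x))\<^sup>2)"

definition l2_inner :: "'a::euclidean_space set \<Rightarrow> ('a \<Rightarrow> real) \<Rightarrow> ('a \<Rightarrow> real) \<Rightarrow> real" where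
  "l2_inner \<Omega> f g = (LINT x|lebesgue_on \<Omega>. f x * g x)"

definition test_fun :: "'a::euclidean_space set \<Rightarrow> ('a \<Rightarrow> real) \<Rightarrow> ('a \<Rightarrow> 'a) \<Rightarrow> bool" where
  "test_fun \<Omega> \<phi> g \<longleftrightarrow> continuous_on UNIV g \<and>
     (\<forall>x. (\<phi> has_derivative (\<lambda>h. g x \<bullet> h)) (at x)) \<and>
     compact (closure {x. \<phi> x \<noteq> 0}) \<and> closure {x. \<phi> x \<noteq> 0} \<subseteq> \<Omega>"

definition weak_grad :: "'a::euclidean_space set \<Rightarrow> ('a \<Rightarrow> real) \<Rightarrow> ('a \<Rightarrow> 'a) \<Rightarrow> bool" where
  "weak_grad \<Omega> f G \<longleftrightarrow> (\<forall>\<phi> g. test_fun \<Omega> \<phi> g \<longrightarrow>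
     (\<forall>b\<in>Basis. (LINT x|lebesgue_on \<Omega>. f x * (g x \<bullet> b)) =
                  - (LINT x|lebesgue_on \<Omega>. (G x \<bullet> b) * \<phi> x)))"

definition H10 :: "'a::euclidean_space set \<Rightarrow> ('a \<Rightarrow> real) \<Rightarrow> ('a \<Rightarrow> 'a) \<Rightarrow> bool" where
  "H10 \<Omega> f G \<longleftrightarrow> L2 \<Omega> f \<and> L2v \<Omega> G \<and> weak_grad \<Omega> f G \<and>
     (\<exists>\<phi>s gs. (\<forall>j. test_fun \<Omega> (\<phi>s j) (gs j)) \<and>
        (\<lambda>j. LINT x|lebesgue_on \<Omega>. (f x - \<phi>s j x)\<^sup>2 + (norm (G x - gs j x))\<^sup>2)
           \<longlonglongrightarrow> 0)"

definition dirichlet_eigenpair :: "'a::euclidean_space set \<Rightarrow> real \<Rightarrow> ('a \<Rightarrow> real) \<Rightarrow> bool" where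
  "dirichlet_eigenpair \<Omega> lam \<xi> \<longleftrightarrow> (\<exists>G. H10 \<Omega> \<xi> G \<and>
     (\<forall>\<phi> g. test_fun \<Omega> \<phi> g \<longrightarrow>
        (LINT x|lebesgue_on \<Omega>. G x \<bullet> g x) = lam * (LINT x|lebesgue_on \<Omega>. \<xi> x * \<phi> x)))"

text \<open>Standing assumptions: xi_1, xi_2, ... (indices from 1) is an orthonormal basis of
  L^2(Omega) of Dirichlet eigenfunctions with eigenvalues 0 < lam_1 < lam_2 \<le> ... \<rightarrow> \<infinity>.\<close>
definition dirichlet_eigenbasis ::
  "'a::euclidean_space set \<Rightarrow> (nat \<Rightarrow> 'a \<Rightarrow> real) \<Rightarrow> (nat \<Rightarrow> real) \<Rightarrow> bool" where
  "dirichlet_eigenbasis \<Omega> \<xi> lam \<longleftrightarrow>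
     (\<forall>i\<ge>1. L2 \<Omega> (\<xi> i) \<and> dirichlet_eigenpair \<Omega> (lam i) (\<xi> i)) \<and>
     (\<forall>i\<ge>1. \<forall>j\<ge>1. l2_inner \<Omega> (\<xi> i) (\<xi> j) = (if i = j then 1 else 0)) \<and>
     (\<forall>f. L2 \<Omega> f \<longrightarrow> (\<forall>i\<ge>1. l2_inner \<Omega> f (\<xi> i) = 0) \<longrightarrow>
          (AE x in lebesgue_on \<Omega>. f x = 0)) \<and>
     0 < lam 1 \<and> lam 1 < lam 2 \<and> (\<forall>i\<ge>1. lam i \<le> lam (Suc i)) \<and>
     filterlim lam at_top sequentially"

text \<open>A control u = \<Sum>_{j=1..k} alpha_j(.) xi_j is represented by alpha.
  Admissible: alpha_i measurable on R^+ with values in [-abar_i, abar_i].\<close>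
definition admissible :: "nat \<Rightarrow> (nat \<Rightarrow> real) \<Rightarrow> (nat \<Rightarrow> real \<Rightarrow> real) \<Rightarrow> bool" where
  "admissible k abar \<alpha> \<longleftrightarrow> (\<forall>i\<in>{1..k}.
     \<alpha> i \<in> borel_measurable (lebesgue_on {0..}) \<and> (\<forall>t\<ge>0. \<bar>\<alpha> i t\<bar> \<le> abar i))"

text \<open>Fourier coefficient <y(t;u,y0), xi_i> of the (mild) solution of
  y_t - Laplace y = chi_omega u, y = 0 on the boundary, y(0) = y0:
  e^{-lam_i t}<y0,xi_i> + int_0^t e^{-lam_i (t-s)} <chi_omega u(s), xi_i> ds.\<close>
definition sol_coeff ::
  "'a::euclidean_space set \<Rightarrow> 'a set \<Rightarrow> (nat \<Rightarrow> 'a \<Rightarrow> real) \<Rightarrow> (nat \<Rightarrow> real) \<Rightarrow> nat \<Rightarrow>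
   (nat \<Rightarrow> real \<Rightarrow> real) \<Rightarrow> ('a \<Rightarrow> real) \<Rightarrow> nat \<Rightarrow> real \<Rightarrow> real" where
  "sol_coeff \<Omega> \<omega> \<xi> lam k \<alpha> y0 i t =
     exp (- (lam i * t)) * l2_inner \<Omega> y0 (\<xi> i) +
     integral {0..t} (\<lambda>s. exp (- (lam i * (t - s))) *
        l2_inner \<Omega> (\<lambda>x. indicator \<omega> x * (\<Sum>j=1..k. \<alpha> j s * \<xi> j x)) (\<xi> i))"

text \<open>y(t;u,y0) \<in> S_m, i.e. <y(t;u,y0), xi_i> = 0 for i = 1..m.\<close>
definition reaches_Sm ::
  "'a::euclidean_space set \<Rightarrow> 'a set \<Rightarrow> (nat \<Rightarrow> 'a \<Rightarrow> real) \<Rightarrow> (nat \<Rightarrow> real) \<Rightarrow> nat \<Rightarrow> nat \<Rightarrow>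
   (nat \<Rightarrow> real \<Rightarrow> real) \<Rightarrow> ('a \<Rightarrow> real) \<Rightarrow> real \<Rightarrow> bool" where
  "reaches_Sm \<Omega> \<omega> \<xi> lam m k \<alpha> y0 t \<longleftrightarrow> (\<forall>i\<in>{1..m}. sol_coeff \<Omega> \<omega> \<xi> lam k \<alpha> y0 i t = 0)"

definition reach_times ::
  "'a::euclidean_space set \<Rightarrow> 'a set \<Rightarrow> (nat \<Rightarrow> 'a \<Rightarrow> real) \<Rightarrow> (nat \<Rightarrow> real) \<Rightarrow> nat \<Rightarrow> nat \<Rightarrow>
   (nat \<Rightarrow> real) \<Rightarrow> ('a \<Rightarrow> real) \<Rightarrow> real set" where
  "reach_times \<Omega> \<omega> \<xi> lam m k abar y0 =
     {t. 0 \<le> t \<and> (\<exists>\<alpha>. admissible k abar \<alpha> \<and> reaches_Sm \<Omega> \<omega> \<xi> lam m k \<alpha> y0 t)}"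

definition opt_time ::
  "'a::euclidean_space set \<Rightarrow> 'a set \<Rightarrow> (nat \<Rightarrow> 'a \<Rightarrow> real) \<Rightarrow> (nat \<Rightarrow> real) \<Rightarrow> nat \<Rightarrow> nat \<Rightarrow>
   (nat \<Rightarrow> real) \<Rightarrow> ('a \<Rightarrow> real) \<Rightarrow> real" where
  "opt_time \<Omega> \<omega> \<xi> lam m k abar y0 = Inf (reach_times \<Omega> \<omega> \<xi> lam m k abar y0)"

definition optimal_control ::
  "'a::euclidean_space set \<Rightarrow> 'a set \<Rightarrow> (nat \<Rightarrow> 'a \<Rightarrow> real) \<Rightarrow> (nat \<Rightarrow> real) \<Rightarrow> nat \<Rightarrow> nat \<Rightarrow>
   (nat \<Rightarrow> real) \<Rightarrow> ('a \<Rightarrow> real) \<Rightarrow> (nat \<Rightarrow> real \<Rightarrow> real) \<Rightarrow> bool" where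
  "optimal_control \<Omega> \<omega> \<xi> lam m k abar y0 \<alpha> \<longleftrightarrow>
     reach_times \<Omega> \<omega> \<xi> lam m k abar y0 \<noteq> {} \<and> admissible k abar \<alpha> \<and>
     reaches_Sm \<Omega> \<omega> \<xi> lam m k \<alpha> y0 (opt_time \<Omega> \<omega> \<xi> lam m k abar y0)"

definition bang_bang ::
  "'a::euclidean_space set \<Rightarrow> 'a set \<Rightarrow> (nat \<Rightarrow> 'a \<Rightarrow> real) \<Rightarrow> (nat \<Rightarrow> real) \<Rightarrow> nat \<Rightarrow> nat \<Rightarrow>
   (nat \<Rightarrow> real) \<Rightarrow> ('a \<Rightarrow> real) \<Rightarrow> bool" where
  "bang_bang \<Omega> \<omega> \<xi> lam m k abar y0 \<longleftrightarrow>
     (\<forall>\<alpha>. optimal_control \<Omega> \<omega> \<xi> lam m k abar y0 \<alpha> \<longrightarrow>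
        (\<forall>i\<in>{1..k}. AE t in lebesgue_on {0<..<opt_time \<Omega> \<omega> \<xi> lam m k abar y0}.
            \<bar>\<alpha> i t\<bar> = abar i))"

end

theory Submission
  imports Defs
begin

lemma exp_has_int:
  fixes l t a b :: real
  assumes "l > 0" "a \<le> b"
  shows "((\<lambda>s. exp (- (l * (t - s)))) has_integral
           (exp (- (l * (t - b))) - exp (- (l * (t - a)))) / l) {a..b}"
proof -
  have "((\<lambda>s. exp (- (l * (t - s))) / l) has_vector_derivative exp (- (l * (t - x)))) (at x within {a..b})" for x
  proof -
    have "((\<lambda>s. exp (- (l * (t - s))) / l) has_real_derivative (exp (- (l * (t - x))) * l) / l) (at x within {a..b})"
      by (auto intro!: derivative_eq_intros)
    then show ?thesis using assms(1) by (simp add: has_real_derivative_iff_has_vector_derivative)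
  qed
  from fundamental_theorem_of_calculus[OF assms(2) this]
  show ?thesis by (simp add: diff_divide_distrib)
qed

lemma int_bound:
  fixes l t A :: real and a :: "real \<Rightarrow> real"
  assumes "l > 0" "t \<ge> 0" "\<And>s. s \<ge> 0 \<Longrightarrow> \<bar>a s\<bar> \<le> A"
  shows "\<bar>integral {0..t} (\<lambda>s. exp (- (l * (t - s))) * a s)\<bar> \<le> A * (1 - exp (- (l * t))) / l"
proof (cases "(\<lambda>s. exp (- (l * (t - s))) * a s) integrable_on {0..t}")
  case True
  have hi: "((\<lambda>s. A * exp (- (l * (t - s)))) has_integral A * ((1 - exp (- (l * t))) / l)) {0..t}"
    using has_integral_mult_right[OF exp_has_int[OF assms(1) assms(2), of t]] by simp
  have "norm (integral {0..t} (\<lambda>s. exp (- (l * (t - s))) * a s)) \<le> integral {0..t} (\<lambda>s. A * exp (- (l * (t - s))))"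
  proof (rule integral_norm_bound_integral[OF True])
    show "(\<lambda>s. A * exp (- (l * (t - s)))) integrable_on {0..t}" using hi by blast
    fix x assume "x \<in> {0..t}"
    then have "\<bar>a x\<bar> \<le> A" using assms(3) by auto
    then show "norm (exp (- (l * (t - x))) * a x) \<le> A * exp (- (l * (t - x)))"
      by (simp add: abs_mult mult.commute)
  qed
  then show ?thesis using integral_unique[OF hi] by simp
next
  case False
  have "A \<ge> 0" using assms(3)[of 0] by simp
  moreover have "exp (- (l * t)) \<le> 1" using assms by simp
  moreover have "integral {0..t} (\<lambda>s. exp (- (l * (t - s))) * a s) = 0"
    using not_integrable_integral[OF False] .
  ultimately show ?thesis using assms(1) by simp
qed

lemma lower_bound:
  fixes l t A y :: real and a :: "real \<Rightarrow> real"
  assumes "l > 0" "A > 0" "t \<ge> 0" "\<And>s. s \<ge> 0 \<Longrightarrow> \<bar>a s\<bar> \<le> A"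
    and eq: "exp (- (l * t)) * y + integral {0..t} (\<lambda>s. exp (- (l * (t - s))) * a s) = 0"
  shows "(1 / l) * ln (1 + (l / A) * \<bar>y\<bar>) \<le> t"
proof -
  have "exp (- (l * t)) * \<bar>y\<bar> \<le> A * (1 - exp (- (l * t))) / l"
  proof -
    have "\<bar>integral {0..t} (\<lambda>s. exp (- (l * (t - s))) * a s)\<bar> \<le> A * (1 - exp (- (l * t))) / l"
      using int_bound[of l t a A] assms by blast
    moreover have "integral {0..t} (\<lambda>s. exp (- (l * (t - s))) * a s) = - (exp (- (l * t)) * y)"
      using eq by linarith
    ultimately show ?thesis by (simp add: abs_mult)
  qed
  then have h1: "exp (l * t) * (exp (- (l * t)) * \<bar>y\<bar>) \<le> exp (l * t) * (A * (1 - exp (- (l * t))) / l)"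
    by (rule mult_left_mono) auto
  moreover have E: "exp (l * t) * exp (- (l * t)) = 1" by (simp add: exp_minus)
  moreover have h2: "exp (l * t) * (A * (1 - exp (- (l * t))) / l) = A * (exp (l * t) - 1) / l"
    using E by (simp add: algebra_simps)
  moreover have h3: "exp (l * t) * (exp (- (l * t)) * \<bar>y\<bar>) = \<bar>y\<bar>"
    using E by (metis mult.assoc mult_1)
  ultimately have "\<bar>y\<bar> \<le> A * (exp (l * t) - 1) / l"
    by (metis h1 h2 h3)
  then have "(l / A) * \<bar>y\<bar> \<le> exp (l * t) - 1"
    using assms(1,2) by (simp add: field_simps)
  then have "1 + (l / A) * \<bar>y\<bar> \<le> exp (l * t)" by simp
  moreover have "0 < 1 + (l / A) * \<bar>y\<bar>" using assms by (simp add: add_pos_nonneg)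
  ultimately have "ln (1 + (l / A) * \<bar>y\<bar>) \<le> l * t"
    by (metis ln_exp ln_le_cancel_iff exp_gt_zero)
  then show ?thesis using assms(1) by (simp add: field_simps)
qed

lemma prod_integrable:
  assumes "L2 \<Omega> f" "L2 \<Omega> g"
  shows "integrable (lebesgue_on \<Omega>) (\<lambda>x. f x * g x)"
proof (rule Bochner_Integration.integrable_bound[where f="\<lambda>x. (f x)\<^sup>2 + (g x)\<^sup>2"])
  show "integrable (lebesgue_on \<Omega>) (\<lambda>x. (f x)\<^sup>2 + (g x)\<^sup>2)"
    using assms unfolding L2_def by auto
  show "(\<lambda>x. f x * g x) \<in> borel_measurable (lebesgue_on \<Omega>)"
    using assms unfolding L2_def by auto
  show "AE x in lebesgue_on \<Omega>. norm (f x * g x) \<le> norm ((f x)\<^sup>2 + (g x)\<^sup>2)"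
  proof (rule AE_I2)
    fix x
    have "2 * \<bar>f x * g x\<bar> \<le> (f x)\<^sup>2 + (g x)\<^sup>2"
      using sum_squares_bound[of "\<bar>f x\<bar>" "\<bar>g x\<bar>"] by (simp add: abs_mult)
    then show "norm (f x * g x) \<le> norm ((f x)\<^sup>2 + (g x)\<^sup>2)" by simp
  qed
qed

lemma inner_ctrl:
  assumes B: "dirichlet_eigenbasis \<Omega> \<xi> lam" and i: "i \<ge> 1"
  shows "l2_inner \<Omega> (\<lambda>x. indicator \<Omega> x * (\<Sum>j=1..k. a j * \<xi> j x)) (\<xi> i) =
         (if i \<le> k then a i else 0)"
proof -
  have L: "\<And>j. j \<ge> 1 \<Longrightarrow> L2 \<Omega> (\<xi> j)" using B unfolding dirichlet_eigenbasis_def by blast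
  have O: "\<And>j. j \<ge> 1 \<Longrightarrow> l2_inner \<Omega> (\<xi> j) (\<xi> i) = (if j = i then 1 else 0)"
    using B i unfolding dirichlet_eigenbasis_def by blast
  have "l2_inner \<Omega> (\<lambda>x. indicator \<Omega> x * (\<Sum>j=1..k. a j * \<xi> j x)) (\<xi> i) =
        (LINT x|lebesgue_on \<Omega>. (\<Sum>j=1..k. a j * (\<xi> j x * \<xi> i x)))"
    unfolding l2_inner_def
    by (rule Bochner_Integration.integral_cong) (auto simp: sum_distrib_right mult.assoc)
  also have "\<dots> = (\<Sum>j=1..k. (LINT x|lebesgue_on \<Omega>. a j * (\<xi> j x * \<xi> i x)))"
    by (rule Bochner_Integration.integral_sum) (use prod_integrable L i in auto)
  also have "\<dots> = (\<Sum>j=1..k. a j * l2_inner \<Omega> (\<xi> j) (\<xi> i))"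
    unfolding l2_inner_def by simp
  also have "\<dots> = (\<Sum>j=1..k. if j = i then a j else 0)"
    by (rule sum.cong) (auto simp: O)
  also have "\<dots> = (if i \<le> k then a i else 0)"
    using i by (simp add: sum.delta)
  finally show ?thesis .
qed

lemma coeff_eq:
  assumes B: "dirichlet_eigenbasis \<Omega> \<xi> lam" and i: "i \<ge> 1"
  shows "sol_coeff \<Omega> \<Omega> \<xi> lam k \<alpha> y0 i t =
     exp (- (lam i * t)) * l2_inner \<Omega> y0 (\<xi> i) +
     integral {0..t} (\<lambda>s. exp (- (lam i * (t - s))) * (if i \<le> k then \<alpha> i s else 0))"
proof -
  have "l2_inner \<Omega> (\<lambda>x. indicator \<Omega> x * (\<Sum>j=1..k. \<alpha> j s * \<xi> j x)) (\<xi> i) =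
         (if i \<le> k then \<alpha> i s else 0)" for s
    using inner_ctrl[OF B i, where k=k and a="\<lambda>j. \<alpha> j s"] by simp
  then show ?thesis unfolding sol_coeff_def by presburger
qed

lemma not_AE_interval:
  fixes a b :: real
  assumes "0 \<le> a" "a < b" "\<And>x. x \<in> {a<..<b} \<Longrightarrow> \<not> P x"
  shows "\<not> (AE x in lebesgue_on {0<..<b}. P x)"
proof
  assume "AE x in lebesgue_on {0<..<b}. P x"
  then obtain N where N: "{x \<in> space (lebesgue_on {0<..<b}). \<not> P x} \<subseteq> N"
      "emeasure (lebesgue_on {0<..<b}) N = 0" "N \<in> sets (lebesgue_on {0<..<b})"
    by (rule AE_E)
  have sub: "{a<..<b} \<subseteq> N" using N(1) assms by auto
  have "emeasure (lebesgue_on {0<..<b}) {a<..<b} = emeasure lebesgue {a<..<b}"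
    by (rule emeasure_restrict_space) (use assms in auto)
  also have "\<dots> = ennreal (b - a)" using assms by simp
  finally have "ennreal (b - a) \<le> emeasure (lebesgue_on {0<..<b}) N"
    using emeasure_mono[OF sub N(3)] by simp
  then show False using N(2) assms by simp
qed

lemma lam_pos:
  assumes B: "dirichlet_eigenbasis \<Omega> \<xi> lam" and i: "i \<ge> 1"
  shows "lam i > 0"
proof -
  have p: "0 < lam 1" and mono: "\<And>i. i \<ge> 1 \<Longrightarrow> lam i \<le> lam (Suc i)"
    using B unfolding dirichlet_eigenbasis_def by auto
  have "lam 1 \<le> lam i" using i
  proof (induction i rule: dec_induct)
    case (step n) then show ?case using mono[of n] by simp
  qed simp
  then show ?thesis using p by simp
qed

lemma meas_step:
  fixes c T :: real
  shows "(\<lambda>s::real. if P \<and> s \<le> T then c else 0) \<in> borel_measurable (lebesgue_on {0..})"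
proof -
  have "(\<lambda>s::real. if P \<and> s \<le> T then c else 0) = (\<lambda>s. (if P then c else 0) * indicator {..T} s)"
    by (auto simp: indicator_def)
  moreover have "(\<lambda>s::real. (if P then c else 0) * indicator {..T} s) \<in> borel_measurable (lebesgue_on {0..})"
    by (intro borel_measurable_times borel_measurable_const measurable_restrict_space1 borel_measurable_indicator) auto
  ultimately show ?thesis by simp
qed

theorem theorem2p2:
  fixes \<Omega> :: "'a::euclidean_space set"
    and \<xi> :: "nat \<Rightarrow> 'a \<Rightarrow> real" and lam :: "nat \<Rightarrow> real"
    and y0 :: "'a \<Rightarrow> real" and abar :: "nat \<Rightarrow> real" and m k :: nat
    and T :: "nat \<Rightarrow> real"
  assumes "open \<Omega>" and "connected \<Omega>" and "bounded \<Omega>" and "\<Omega> \<noteq> {}"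
    and "dirichlet_eigenbasis \<Omega> \<xi> lam"
    and "m \<ge> 2" and "k \<ge> 1"
    and "L2 \<Omega> y0"
    and "\<exists>i\<in>{1..m}. l2_inner \<Omega> y0 (\<xi> i) \<noteq> 0"
    and "\<forall>i\<in>{1..k}. abar i > 0"
    and "\<And>i. T i = (1 / lam i) * ln (1 + (lam i / abar i) * \<bar>l2_inner \<Omega> y0 (\<xi> i)\<bar>)"
    and "(k \<ge> m \<and> (\<exists>i\<in>{1..m}. \<exists>j\<in>{1..m}. T i \<noteq> T j)) \<or>
         (k < m \<and> (\<forall>j\<in>{k+1..m}. l2_inner \<Omega> y0 (\<xi> j) = 0) \<and>
            (\<exists>i\<in>{1..k}. \<exists>j\<in>{1..k}. T i \<noteq> T j))"
  shows "\<not> bang_bang \<Omega> \<Omega> \<xi> lam m k abar y0"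
proof -
  note B = assms(5)
  define y where "y i = l2_inner \<Omega> y0 (\<xi> i)" for i
  define I where "I = {1..min k m}"
  have Ine: "I \<noteq> {}" "finite I" using assms(6,7) by (auto simp: I_def)
  have Isub: "I \<subseteq> {1..k}" "I \<subseteq> {1..m}" by (auto simp: I_def)
  have outside: "k < i \<and> y i = 0" if "i \<in> {1..m}" "i \<notin> I" for i
    using assms(12) that by (auto simp: I_def y_def)
  have Tdiff: "\<exists>i\<in>I. \<exists>j\<in>I. T i \<noteq> T j"
  proof (cases "m \<le> k")
    case True then have "I = {1..m}" by (simp add: I_def)
    then show ?thesis using assms(12) True by auto
  next
    case False then have "I = {1..k}" by (simp add: I_def)
    then show ?thesis using assms(12) False by auto
  qed
  define ts where "ts = Max (T ` I)"
  have Tle: "T i \<le> ts" if "i \<in> I" for i using Ine that by (auto simp: ts_def)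
  obtain i0 where i0: "i0 \<in> I" "T i0 < ts"
  proof -
    from Tdiff obtain i j where ij: "i \<in> I" "j \<in> I" "T i \<noteq> T j" by blast
    show ?thesis
    proof (cases "T i < T j")
      case True then show ?thesis using that[of i] ij Tle[of j] by linarith
    next
      case False then show ?thesis using that[of j] ij Tle[of i] by linarith
    qed
  qed
  have lpos: "lam i > 0" if "i \<in> I" for i using lam_pos[OF B] that by (auto simp: I_def)
  have apos: "abar i > 0" if "i \<in> I" for i using assms(10) Isub that by auto
  have argpos: "0 < 1 + lam i / abar i * \<bar>y i\<bar>" if "i \<in> I" for i
    using lpos[OF that] apos[OF that] by (simp add: add_pos_nonneg)
  have Tnn: "0 \<le> T i" if "i \<in> I" for i
  proof -
    have "0 \<le> ln (1 + lam i / abar i * \<bar>y i\<bar>)"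
      using lpos[OF that] apos[OF that] by simp
    then show ?thesis using assms(11)[of i] lpos[OF that] by (simp add: y_def)
  qed
  have expT: "exp (lam i * T i) = 1 + lam i / abar i * \<bar>y i\<bar>" if "i \<in> I" for i
  proof -
    have "lam i * T i = ln (1 + lam i / abar i * \<bar>y i\<bar>)"
      using assms(11)[of i] lpos[OF that] by (simp add: y_def)
    then show ?thesis using argpos[OF that] by simp
  qed
  define \<alpha> where "\<alpha> i s = (if i \<in> I \<and> s \<le> T i then - (abar i * sgn (y i)) else 0)" for i s
  have adm: "admissible k abar \<alpha>"
    unfolding admissible_def
  proof (intro ballI conjI allI impI)
    fix i assume i: "i \<in> {1..k}"
    show "\<alpha> i \<in> borel_measurable (lebesgue_on {0..})"
      unfolding \<alpha>_def by (rule meas_step)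
    fix t :: real
    have ai: "abar i > 0" using assms(10) i by blast
    have "\<bar>abar i * sgn (y i)\<bar> \<le> abar i"
      using ai by (auto simp: abs_mult abs_sgn_eq)
    then show "\<bar>\<alpha> i t\<bar> \<le> abar i" using assms(10) i by (auto simp: \<alpha>_def)
  qed
  have reach: "reaches_Sm \<Omega> \<Omega> \<xi> lam m k \<alpha> y0 ts"
    unfolding reaches_Sm_def
  proof
    fix i assume im: "i \<in> {1..m}"
    show "sol_coeff \<Omega> \<Omega> \<xi> lam k \<alpha> y0 i ts = 0"
    proof (cases "i \<in> I")
      case False
      then have "k < i" "y i = 0" using outside im by auto
      then show ?thesis using coeff_eq[OF B, of i k \<alpha> y0 ts] im by (simp add: y_def)
    next
      case True
      define L where "L = lam i"
      define c where "c = abar i * sgn (y i)"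
      have ik: "i \<le> k" "i \<ge> 1" using True Isub by auto
      have L: "L > 0" using lpos[OF True] by (simp add: L_def)
      have "integral {0..ts} (\<lambda>s. exp (- (lam i * (ts - s))) * (if i \<le> k then \<alpha> i s else 0)) =
            integral {0..ts} (\<lambda>s. if s \<in> {..T i} then - c * exp (- (L * (ts - s))) else 0)"
        by (rule integral_cong) (use True ik in \<open>auto simp: \<alpha>_def c_def L_def\<close>)
      also have "\<dots> = integral ({..T i} \<inter> {0..ts}) (\<lambda>s. - c * exp (- (L * (ts - s))))"
        by (rule integral_restrict_Int)
      also have "{..T i} \<inter> {0..ts} = {0..T i}" using Tle[OF True] by auto
      also have "integral {0..T i} (\<lambda>s. - c * exp (- (L * (ts - s)))) =
                 - c * ((exp (- (L * (ts - T i))) - exp (- (L * (ts - 0)))) / L)"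
        using integral_unique[OF has_integral_mult_right[OF exp_has_int[OF L Tnn[OF True], of ts], of "- c"]]
        by simp
      finally have int: "integral {0..ts} (\<lambda>s. exp (- (lam i * (ts - s))) * (if i \<le> k then \<alpha> i s else 0))
          = - c * ((exp (- (L * ts)) * exp (L * T i) - exp (- (L * ts))) / L)"
        by (simp add: exp_add[symmetric] algebra_simps)
      have e: "exp (L * T i) - 1 = L / abar i * \<bar>y i\<bar>" using expT[OF True] by (simp add: L_def)
      have "c * ((exp (- (L * ts)) * exp (L * T i) - exp (- (L * ts))) / L)
            = exp (- (L * ts)) * (c * (exp (L * T i) - 1) / L)" by (simp add: algebra_simps)
      also have "c * (exp (L * T i) - 1) / L = y i"
        using e L apos[OF True] by (simp add: c_def sgn_mult_abs)
      finally have "c * ((exp (- (L * ts)) * exp (L * T i) - exp (- (L * ts))) / L) = exp (- (L * ts)) * y i" .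
      then show ?thesis using coeff_eq[OF B ik(2), of k \<alpha> y0 ts] int
        by (simp add: y_def L_def)
    qed
  qed
  have lower: "ts \<le> t" if "t \<in> reach_times \<Omega> \<Omega> \<xi> lam m k abar y0" for t
  proof -
    from that obtain \<beta> where t0: "0 \<le> t" and adm\<beta>: "admissible k abar \<beta>"
      and r\<beta>: "reaches_Sm \<Omega> \<Omega> \<xi> lam m k \<beta> y0 t"
      unfolding reach_times_def by auto
    have "T i \<le> t" if iI: "i \<in> I" for i
    proof -
      have ik: "i \<le> k" "i \<ge> 1" "i \<in> {1..m}" using iI Isub by auto
      have bnd: "\<And>s. s \<ge> 0 \<Longrightarrow> \<bar>\<beta> i s\<bar> \<le> abar i" using adm\<beta> ik unfolding admissible_def by auto
      have "sol_coeff \<Omega> \<Omega> \<xi> lam k \<beta> y0 i t = 0" using r\<beta> ik unfolding reaches_Sm_def by auto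
      then have "exp (- (lam i * t)) * y i + integral {0..t} (\<lambda>s. exp (- (lam i * (t - s))) * \<beta> i s) = 0"
        using coeff_eq[OF B ik(2), of k \<beta> y0 t] ik by (simp add: y_def)
      from lower_bound[OF lpos[OF iI] apos[OF iI] t0 bnd this]
      show ?thesis using assms(11)[of i] by (simp add: y_def)
    qed
    then show ?thesis using Ine by (simp add: ts_def)
  qed
  have tsnn: "0 \<le> ts" using Tnn[OF i0(1)] i0(2) by linarith
  have inR: "ts \<in> reach_times \<Omega> \<Omega> \<xi> lam m k abar y0"
    unfolding reach_times_def using tsnn adm reach by blast
  have opt: "opt_time \<Omega> \<Omega> \<xi> lam m k abar y0 = ts"
    unfolding opt_time_def by (rule cInf_eq_minimum[OF inR lower])
  have oc: "optimal_control \<Omega> \<Omega> \<xi> lam m k abar y0 \<alpha>"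
    unfolding optimal_control_def opt using inR adm reach by blast
  have "\<not> (AE t in lebesgue_on {0<..<ts}. \<bar>\<alpha> i0 t\<bar> = abar i0)"
  proof (rule not_AE_interval[OF Tnn[OF i0(1)] i0(2)])
    fix x assume "x \<in> {T i0<..<ts}"
    then show "\<not> \<bar>\<alpha> i0 x\<bar> = abar i0" using apos[OF i0(1)] by (auto simp: \<alpha>_def)
  qed
  then show ?thesis unfolding bang_bang_def opt using oc i0(1) Isub by blast
qed

end
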